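(* Let $k\ge1$ and $n$ be integers, and suppose that neither $0$ nor $k-1$ lies in the tail of $G(n,k)$. Then $G(n,k)$ has a cycle $C'$ containing both $k-1$ and $(n-3)_{k+1}$, and a cycle $C''$ containing both $0$ and $(n-1)_{k+1}$. Moreover, $C'$ is longer (has more edges) than the tail.
   Context: For an integer $\ell$, $\ell_k$ and $\ell_{k+1}$ denote the least nonnegative residues of $\ell$ modulo $k$ and $k+1$. $G(n,k)$ is the directed graph on vertices $0,1,\dots,k$ whose edges are exactly the $k$ edges $(i+n-2)_{k+1}\to(i+n-1)_k$, $1\le i\le k$; a loop $a\to a$ counts as a cycle of length $1$. Vertex $k$ has in-degree $0$, vertex $(n-2)_{k+1}$ has out-degree $0$, and all other vertices have in- and out-degree $1$, so $G(n,k)$ is a disjoint union of directed cycles and one directed path, the tail, from $k$ to $(n-2)_{k+1}$ (of length $0$ if $k=(n-2)_{k+1}$). Lengths are numbers of edges. *)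

theory Defs
  imports Main
begin

text \<open>Edges of G(n,k): (i+n-2) mod (k+1) -> (i+n-1) mod k for 1 <= i <= k.
  Vertices are integers 0..k; int mod with positive divisor is the least nonnegative residue.\<close>
definition Gedges :: "int \<Rightarrow> int \<Rightarrow> (int \<times> int) set" where
  "Gedges n k = {((i + n - 2) mod (k + 1), (i + n - 1) mod k) | i. 1 \<le> i \<and> i \<le> k}"

text \<open>A directed cycle: nonempty list of distinct vertices, each joined to the next cyclically.
  Its length (number of edges) is the length of the list; a loop is a cycle of length 1.\<close>
definition is_cycle :: "int \<Rightarrow> int \<Rightarrow> int list \<Rightarrow> bool" where
  "is_cycle n k c \<longleftrightarrow> c \<noteq> [] \<and> distinct c \<and>
     (\<forall>i < length c. (c ! i, c ! ((i + 1) mod length c)) \<in> Gedges n k)"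

text \<open>The tail: the directed path (list of distinct vertices) from k to (n-2) mod (k+1).
  Its length (number of edges) is length of the list minus 1.\<close>
definition is_tail :: "int \<Rightarrow> int \<Rightarrow> int list \<Rightarrow> bool" where
  "is_tail n k p \<longleftrightarrow> p \<noteq> [] \<and> distinct p \<and> hd p = k \<and> last p = (n - 2) mod (k + 1) \<and>
     (\<forall>i. i + 1 < length p \<longrightarrow> (p ! i, p ! (i + 1)) \<in> Gedges n k)"

end

theory Submission
  imports Defs
begin


definition FF :: "int \<Rightarrow> int \<Rightarrow> int \<Rightarrow> int \<Rightarrow> int" where
"FF k s a x = (if x = s-1 then a mod k else if x < s-1 then (x+a+1) mod k else (x+a) mod k)"

lemma edge_lemma:
  fixes n k x :: int
  assumes k: "k \<ge> 1" and s: "s = (n-1) mod (k+1)" and a: "a = (n-1) div (k+1) + 1"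
    and x: "0 \<le> x" "x \<le> k-1"
  shows "((if x = s-1 then k else x), FF k s a x) \<in> Gedges n k"
proof -
  define q where "q = (n-1) div (k+1)"
  have nq: "n - 1 = q*(k+1) + s" unfolding q_def s using div_mult_mod_eq[of "n-1" "k+1"] by linarith
  have s0: "0 \<le> s" "s \<le> k" using k s pos_mod_bound[of "k+1" "n-1"] by auto
  have md: "(y + q*(k+1)) mod k = (y + q) mod k" for y
  proof -
    have "y + q*(k+1) = (y+q) + q*k" by (simp add: algebra_simps)
    then show ?thesis by (metis mod_mult_self1)
  qed
  have md2: "(y + q*(k+1)) mod (k+1) = y mod (k+1)" for y by simp
  show ?thesis
  proof (cases "x = s - 1")
    case True
    define i where "i = k + 1 - s"
    have "1 \<le> i" "i \<le> k" using True x s0 unfolding i_def by auto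
    moreover have "(i + n - 2) mod (k+1) = k"
    proof -
      have e: "i + n - 2 = k + q*(k+1)" unfolding i_def using nq by simp
      show ?thesis unfolding e md2 using k by simp
    qed
    moreover have "(i + n - 1) mod k = FF k s a x"
    proof -
      have e: "i + n - 1 = (k+1) + q*(k+1)" unfolding i_def using nq by simp
      have "(i + n - 1) mod k = (k+1+q) mod k" unfolding e md by simp
      also have "\<dots> = (q+1) mod k"
        by (metis add.commute add.left_commute mod_add_self2)
      finally show ?thesis using True unfolding FF_def a q_def by simp
    qed
    ultimately show ?thesis unfolding Gedges_def using True by force
  next
    case False
    show ?thesis
    proof (cases "x < s - 1")
      case True
      define i where "i = x + k + 2 - s"
      have "1 \<le> i" "i \<le> k" using True x s0 unfolding i_def by auto
      moreover have "(i + n - 2) mod (k+1) = x"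
      proof -
        have e: "i + n - 2 = (x + (k+1)) + q*(k+1)" unfolding i_def using nq by simp
        show ?thesis unfolding e md2 using x by simp
      qed
      moreover have "(i + n - 1) mod k = FF k s a x"
      proof -
        have e: "i + n - 1 = (x+k+2) + q*(k+1)" unfolding i_def using nq by simp
        have "(i + n - 1) mod k = (x+k+2+q) mod k" unfolding e md by simp
        also have "\<dots> = (x+a+1) mod k" unfolding a q_def
          by (metis (no_types, opaque_lifting) add.commute add.left_commute mod_add_self2 one_add_one add.assoc)
        finally show ?thesis using True False unfolding FF_def by simp
      qed
      ultimately show ?thesis unfolding Gedges_def using False by force
    next
      case F2: False
      define i where "i = x + 1 - s"
      have "1 \<le> i" "i \<le> k" using False F2 x s0 unfolding i_def by auto
      moreover have "(i + n - 2) mod (k+1) = x"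
      proof -
        have e: "i + n - 2 = x + q*(k+1)" unfolding i_def using nq by simp
        show ?thesis unfolding e md2 using x by simp
      qed
      moreover have "(i + n - 1) mod k = FF k s a x"
      proof -
        have e: "i + n - 1 = (x+1) + q*(k+1)" unfolding i_def using nq by simp
        have "(i + n - 1) mod k = (x+1+q) mod k" unfolding e md by simp
        also have "\<dots> = (x+a) mod k" unfolding a q_def by (simp add: algebra_simps)
        finally show ?thesis using F2 False unfolding FF_def by simp
      qed
      ultimately show ?thesis unfolding Gedges_def using False by force
    qed
  qed
qed

lemma edges_fun:
  assumes "k \<ge> 1" "(x,y) \<in> Gedges n k" "(x,y') \<in> Gedges n k" shows "y = y'"
proof -
  obtain i where i: "1 \<le> i" "i \<le> k" "x = (i+n-2) mod (k+1)" "y = (i+n-1) mod k"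
    using assms(2) unfolding Gedges_def by auto
  obtain j where j: "1 \<le> j" "j \<le> k" "x = (j+n-2) mod (k+1)" "y' = (j+n-1) mod k"
    using assms(3) unfolding Gedges_def by auto
  have "(k+1) dvd ((i+n-2) - (j+n-2))" using i(3) j(3) by (metis mod_eq_dvd_iff)
  then have "(k+1) dvd (i - j)" by simp
  then obtain c where "i - j = (k+1)*c" by (auto elim: dvdE)
  with i j have "i = j"
    by (smt (verit, best) mult_le_cancel_left1 mult_less_cancel_left2 mult_minus_right)
  then show ?thesis using i j by simp
qed

lemma edges_cofun:
  assumes "k \<ge> 1" "(x,y) \<in> Gedges n k" "(x',y) \<in> Gedges n k" shows "x = x'"
proof -
  obtain i where i: "1 \<le> i" "i \<le> k" "x = (i+n-2) mod (k+1)" "y = (i+n-1) mod k"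
    using assms(2) unfolding Gedges_def by auto
  obtain j where j: "1 \<le> j" "j \<le> k" "x' = (j+n-2) mod (k+1)" "y = (j+n-1) mod k"
    using assms(3) unfolding Gedges_def by auto
  have "k dvd ((i+n-1) - (j+n-1))" using i(4) j(4) by (metis mod_eq_dvd_iff)
  then have "k dvd (i - j)" by simp
  then obtain c where "i - j = k*c" by (auto elim: dvdE)
  with i j have "i = j"
    by (smt (verit, best) mult_le_cancel_left1 mult_less_cancel_left2 mult_minus_right)
  then show ?thesis using i j by simp
qed



lemma funpow_in: "F ` S \<subseteq> S \<Longrightarrow> x \<in> S \<Longrightarrow> (F^^m) x \<in> S"
  by (induction m) auto

lemma funpow_cancel:
  assumes "inj_on F S" "F ` S \<subseteq> S" "x \<in> S" "y \<in> S" "(F^^(a+c)) x = (F^^(b+c)) y"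
  shows "(F^^a) x = (F^^b) y"
  using assms(5)
proof (induction c)
  case 0 then show ?case by simp
next
  case (Suc c)
  have "F ((F^^(a+c)) x) = F ((F^^(b+c)) y)" using Suc.prems by simp
  then have "(F^^(a+c)) x = (F^^(b+c)) y"
    using assms(1) funpow_in[OF assms(2) assms(3)] funpow_in[OF assms(2) assms(4)]
    by (meson inj_onD)
  then show ?case using Suc.IH by simp
qed

lemma period_exists:
  assumes "finite S" "inj_on F S" "F ` S \<subseteq> S" "x \<in> S"
  shows "\<exists>L>0. (F^^L) x = x"
proof -
  define g where "g m = (F^^m) x" for m
  have sub: "g ` {..card S} \<subseteq> S" unfolding g_def using funpow_in[OF assms(3,4)] by auto
  have "\<not> inj_on g {..card S}"
  proof
    assume "inj_on g {..card S}"
    then have "card {..card S} \<le> card S" using card_inj_on_le[OF _ sub assms(1)] by simp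
    then show False by simp
  qed
  then obtain i j where ij: "i \<noteq> j" "g i = g j" unfolding inj_on_def by auto
  have "\<exists>i j. i < j \<and> g i = g j" using ij by (metis linorder_neqE_nat)
  then obtain i j where ij: "i < j" "g i = g j" by blast
  have "(F^^(0+i)) x = (F^^((j-i)+i)) x" using ij unfolding g_def by simp
  then have "(F^^0) x = (F^^(j-i)) x" using funpow_cancel[OF assms(2,3,4,4)] by blast
  then show ?thesis using ij by (intro exI[of _ "j-i"]) auto
qed

definition per :: "('a \<Rightarrow> 'a) \<Rightarrow> 'a \<Rightarrow> nat" where
  "per F x = (LEAST L. 0 < L \<and> (F^^L) x = x)"

locale permS =
  fixes S :: "'a set" and F :: "'a \<Rightarrow> 'a"
  assumes fin: "finite S" and inj: "inj_on F S" and sub: "F ` S \<subseteq> S"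
begin

lemma per_props:
  assumes "x \<in> S"
  shows "0 < per F x" "(F^^(per F x)) x = x" "0 < m \<Longrightarrow> m < per F x \<Longrightarrow> (F^^m) x \<noteq> x"
proof -
  obtain L where L: "0 < L" "(F^^L) x = x" using period_exists[OF fin inj sub assms] by blast
  have *: "0 < per F x \<and> (F^^(per F x)) x = x" unfolding per_def
    by (rule LeastI[of _ L]) (use L in auto)
  then show "0 < per F x" "(F^^(per F x)) x = x" by auto
  show "0 < m \<Longrightarrow> m < per F x \<Longrightarrow> (F^^m) x \<noteq> x"
    unfolding per_def using not_less_Least by blast
qed

lemma funpow_mult_per:
  assumes "x \<in> S" shows "(F^^(per F x * c)) x = x"
proof (induction c)
  case 0 then show ?case by simp
next
  case (Suc c)
  have e: "per F x * Suc c = per F x + per F x * c" by simp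
  have "(F^^(per F x * Suc c)) x = (F^^(per F x)) ((F^^(per F x * c)) x)"
    unfolding e funpow_add by simp
  then show ?case using Suc per_props(2)[OF assms] by simp
qed

lemma funpow_mod_per:
  assumes "x \<in> S" shows "(F^^m) x = (F^^(m mod per F x)) x"
proof -
  have "m = m mod per F x + per F x * (m div per F x)" by simp
  then have "(F^^m) x = (F^^(m mod per F x)) ((F^^(per F x * (m div per F x))) x)"
    by (metis funpow_add o_apply)
  then show ?thesis using funpow_mult_per[OF assms] by simp
qed

lemma funpow_distinct:
  assumes "x \<in> S" "i < j" "j < per F x"
  shows "(F^^i) x \<noteq> (F^^j) x"
proof
  assume h: "(F^^i) x = (F^^j) x"
  have e: "j - i + i = j" using assms(2) by simp
  have "(F^^(0+i)) x = (F^^((j-i)+i)) x" unfolding e using h by simp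
  then have "(F^^0) x = (F^^(j-i)) x" by (rule funpow_cancel[OF inj sub assms(1,1)])
  then have "(F^^(j-i)) x = x" by simp
  moreover have "0 < j-i" "j - i < per F x" using assms by auto
  ultimately show False using per_props(3)[OF assms(1)] by blast
qed

lemma orbit_list_distinct:
  assumes "x \<in> S" shows "distinct (map (\<lambda>j. (F^^j) x) [0..<per F x])"
proof -
  have "(F^^i) x \<noteq> (F^^j) x" if "i < per F x" "j < per F x" "i \<noteq> j" for i j
  proof (cases "i < j")
    case True then show ?thesis using funpow_distinct[OF assms True that(2)] by simp
  next
    case False then have "j < i" using that(3) by simp
    then show ?thesis using funpow_distinct[OF assms _ that(1)] by metis
  qed
  then show ?thesis unfolding distinct_conv_nth by simp
qed

lemma orbit_back:
  assumes "x \<in> S" "(F^^i) x = y" shows "\<exists>m. (F^^m) y = x"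
proof -
  have le: "Suc i \<le> per F x * Suc i" using per_props(1)[OF assms(1)] mult_le_mono1[of 1 "per F x" "Suc i"] by simp
  have e: "per F x * Suc i - i + i = per F x * Suc i" using le by simp
  have "(F^^(per F x * Suc i - i)) y = (F^^(per F x * Suc i - i + i)) x"
    using assms(2) by (simp only: funpow_add o_apply)
  also have "\<dots> = x" unfolding e by (rule funpow_mult_per[OF assms(1)])
  finally show ?thesis by blast
qed

end


lemma FF_range: "k \<ge> 1 \<Longrightarrow> 0 \<le> FF k s a x \<and> FF k s a x \<le> k - 1"
  unfolding FF_def by (auto simp: pos_mod_bound[THEN less_imp_le] intro: zless_imp_add1_zle)

lemma FF_shift:
  assumes "k \<ge> 1" "2 \<le> s" "s \<le> k - 1" "0 \<le> x" "x + 1 \<le> k - 1" "x \<noteq> s - 2" "x \<noteq> s - 1"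
  shows "FF k s a (x+1) = (FF k s a x + 1) mod k"
proof (cases "x < s - 1")
  case True
  then have "x + 1 < s - 1" using assms by simp
  then have e1: "FF k s a (x+1) = (x+a+1+1) mod k" "FF k s a x = (x+a+1) mod k"
    using True unfolding FF_def by (simp_all add: algebra_simps)
  show ?thesis unfolding e1 by (rule mod_add_left_eq[symmetric])
next
  case False
  then have e1: "FF k s a (x+1) = (x+a+1) mod k" "FF k s a x = (x+a) mod k"
    using assms unfolding FF_def by (simp_all add: algebra_simps)
  show ?thesis unfolding e1 by (rule mod_add_left_eq[symmetric])
qed

lemma tail_len_unique:
  assumes k: "k \<ge> 1" and p: "is_tail n k p" and p': "is_tail n k p'"
  shows "length p = length p'"
proof -
  have ne: "p \<noteq> []" "p' \<noteq> []" using p p' unfolding is_tail_def by auto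
  have h0: "p ! 0 = k" "p' ! 0 = k" using p p' ne unfolding is_tail_def by (simp_all add: hd_conv_nth)
  have eqi: "i < length p \<Longrightarrow> i < length p' \<Longrightarrow> p ! i = p' ! i" for i
  proof (induction i)
    case 0 then show ?case using h0 by simp
  next
    case (Suc i)
    have "(p ! i, p ! Suc i) \<in> Gedges n k" using p Suc.prems unfolding is_tail_def by simp
    moreover have "(p' ! i, p' ! Suc i) \<in> Gedges n k" using p' Suc.prems unfolding is_tail_def by simp
    moreover have "p ! i = p' ! i" using Suc by simp
    ultimately show ?case using edges_fun[OF k] by metis
  qed
  have lastp: "p ! (length p - 1) = (n - 2) mod (k+1)" "p' ! (length p' - 1) = (n - 2) mod (k+1)"
    using p p' ne unfolding is_tail_def by (auto simp: last_conv_nth)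
  have dist: "distinct p" "distinct p'" using p p' unfolding is_tail_def by auto
  show ?thesis
  proof (rule ccontr)
    assume "length p \<noteq> length p'"
    then consider "length p < length p'" | "length p' < length p" by linarith
    then show False
    proof cases
      case 1
      have "p' ! (length p - 1) = p ! (length p - 1)" using eqi[of "length p - 1"] 1 ne by simp
      then have "p' ! (length p - 1) = p' ! (length p' - 1)" using lastp by simp
      then have "length p - 1 = length p' - 1" using nth_eq_iff_index_eq[OF dist(2), of "length p - 1" "length p' - 1"] 1 ne by simp
      moreover have "0 < length p" "0 < length p'" using ne by auto
      ultimately show False using 1 by arith
    next
      case 2
      have "p ! (length p' - 1) = p' ! (length p' - 1)" using eqi[of "length p' - 1"] 2 ne by simp
      then have "p ! (length p' - 1) = p ! (length p - 1)" using lastp by simp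
      then have "length p' - 1 = length p - 1" using nth_eq_iff_index_eq[OF dist(1), of "length p' - 1" "length p - 1"] 2 ne by simp
      moreover have "0 < length p" "0 < length p'" using ne by auto
      ultimately show False using 2 by arith
    qed
  qed
qed



theorem lemma3p8:
  fixes n k :: int
  assumes "k \<ge> 1"
    and "\<forall>p. is_tail n k p \<longrightarrow> 0 \<notin> set p \<and> k - 1 \<notin> set p"
  shows "(\<exists>C'. is_cycle n k C' \<and> k - 1 \<in> set C' \<and> (n - 3) mod (k + 1) \<in> set C' \<and>
             (\<forall>p. is_tail n k p \<longrightarrow> length C' > length p - 1))
       \<and> (\<exists>C''. is_cycle n k C'' \<and> 0 \<in> set C'' \<and> (n - 1) mod (k + 1) \<in> set C'')"
proof -
  note k = assms(1)
  define s where "s = (n-1) mod (k+1)"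
  define q where "q = (n-1) div (k+1)"
  define a where "a = q + 1"
  define F where "F = FF k s a"
  define S where "S = {0..k-1}"
  have nq: "n - 1 = q*(k+1) + s" unfolding q_def s_def using div_mult_mod_eq[of "n-1" "k+1"] by linarith
  have s0: "0 \<le> s" "s \<le> k" using k pos_mod_bound[of "k+1" "n-1"] unfolding s_def by auto
  have edge: "x \<in> S \<Longrightarrow> ((if x = s-1 then k else x), F x) \<in> Gedges n k" for x
    using edge_lemma[OF k s_def, of a x] unfolding a_def q_def F_def S_def by auto
  have FS: "F x \<in> S" for x using FF_range[OF k] unfolding F_def S_def by auto
  have sub: "F ` S \<subseteq> S" using FS by auto
  have inj: "inj_on F S"
  proof
    fix x y assume xy: "x \<in> S" "y \<in> S" "F x = F y"
    have "(if x = s-1 then k else x) = (if y = s-1 then k else y)"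
      using edge[OF xy(1)] edge[OF xy(2)] xy(3) edges_cofun[OF k] by metis
    then show "x = y" using xy(1,2) unfolding S_def by (auto split: if_splits)
  qed
  have fin: "finite S" unfolding S_def by simp
  interpret P: permS S F using fin inj sub by unfold_locales
  have FmS: "x \<in> S \<Longrightarrow> (F^^m) x \<in> S" for x m using funpow_in[OF sub] by blast
  have cyc: "is_cycle n k (map (\<lambda>j. (F^^j) x) [0..<per F x])"
    if x: "x \<in> S" and av: "\<forall>m. (F^^m) x \<noteq> s - 1" for x
  proof -
    have pp: "0 < per F x" using P.per_props(1)[OF x] .
    have "((F^^i) x, (F^^((i+1) mod per F x)) x) \<in> Gedges n k" if i: "i < per F x" for i
    proof -
      have "(F^^((i+1) mod per F x)) x = (F^^(i+1)) x"
        using P.funpow_mod_per[OF x, of "i+1"] by simp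
      also have "\<dots> = F ((F^^i) x)" by simp
      finally show ?thesis using edge[OF FmS[OF x, of i]] av by simp
    qed
    then show ?thesis unfolding is_cycle_def using pp P.orbit_list_distinct[OF x] by auto
  qed
  have km1: "k - 1 \<in> S" "0 \<in> S" using k unfolding S_def by auto
  show ?thesis
  proof (cases "s = 0")
    case True
    have avS: "\<forall>m. (F^^m) x \<noteq> s - 1" if "x \<in> S" for x
      using FmS[OF that] True unfolding S_def by (metis atLeastAtMost_iff diff_0 neg_0_le_iff_le not_one_le_zero)
    have t: "(n-2) mod (k+1) = k"
    proof -
      have e: "n - 2 = k + (q - 1)*(k+1)" using nq True by (simp add: algebra_simps)
      show ?thesis unfolding e using k by simp
    qed
    have t3: "(n-3) mod (k+1) = k - 1"
    proof -
      have e: "n - 3 = (k - 1) + (q - 1)*(k+1)" using nq True by (simp add: algebra_simps)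
      show ?thesis unfolding e using k by simp
    qed
    have tl: "length p = 1" if "is_tail n k p" for p
    proof -
      have ne: "p \<noteq> []" and d: "distinct p" and h: "p ! 0 = k" and l: "p ! (length p - 1) = k"
        using that t unfolding is_tail_def by (auto simp: hd_conv_nth last_conv_nth)
      have "0 = length p - 1" using nth_eq_iff_index_eq[OF d, of 0 "length p - 1"] ne h l by simp
      then show ?thesis using ne by (cases p) auto
    qed
    define C1 where "C1 = map (\<lambda>j. (F^^j) (k-1)) [0..<per F (k-1)]"
    define C2 where "C2 = map (\<lambda>j. (F^^j) 0) [0..<per F 0]"
    have c1: "is_cycle n k C1" unfolding C1_def by (rule cyc[OF km1(1) avS[OF km1(1)]])
    have c2: "is_cycle n k C2" unfolding C2_def by (rule cyc[OF km1(2) avS[OF km1(2)]])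
    have m1: "k - 1 \<in> set C1" unfolding C1_def using P.per_props(1)[OF km1(1)] by force
    have m2: "0 \<in> set C2" unfolding C2_def using P.per_props(1)[OF km1(2)] by force
    have len: "length C1 > 0" using m1 by (cases C1) auto
    show ?thesis
      using c1 c2 m1 m2 len tl t3 True unfolding s_def by auto
  next
    case False
    then have s1: "1 \<le> s" using s0 by simp
    define t where "t = s - 1"
    have tS: "t \<in> S" unfolding t_def S_def using s0 s1 by simp
    have tt: "(n-2) mod (k+1) = t"
    proof -
      have e: "n - 2 = (s - 1) + q*(k+1)" using nq by (simp add: algebra_simps)
      show ?thesis unfolding e t_def using s0 s1 by simp
    qed
    define Lt where "Lt = per F t"
    have Lt0: "0 < Lt" and Ltt: "(F^^Lt) t = t" and Ltm: "\<And>m. 0 < m \<Longrightarrow> m < Lt \<Longrightarrow> (F^^m) t \<noteq> t"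
      using P.per_props[OF tS] unfolding Lt_def by auto
    define p0 where "p0 = k # map (\<lambda>j. (F^^(Suc j)) t) [0..<Lt]"
    have p0tail: "is_tail n k p0"
    proof -
      have d1: "distinct (map (\<lambda>j. (F^^(Suc j)) t) [0..<Lt])"
      proof -
        have "(F^^(Suc i)) t \<noteq> (F^^(Suc j)) t" if "i < Lt" "j < Lt" "i \<noteq> j" for i j
        proof
          assume "(F^^(Suc i)) t = (F^^(Suc j)) t"
          then have "(F^^(i+1)) t = (F^^(j+1)) t" by simp
          then have "(F^^i) t = (F^^j) t" using funpow_cancel[OF inj sub tS tS] by blast
          moreover have "(F^^i) t \<noteq> (F^^j) t"
          proof (cases "i < j")
            case True then show ?thesis using P.funpow_distinct[OF tS True] that unfolding Lt_def by simp
          next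
            case False then have "j < i" using that by simp
            then show ?thesis using P.funpow_distinct[OF tS _ ] that unfolding Lt_def by metis
          qed
          ultimately show False by simp
        qed
        then show ?thesis unfolding distinct_conv_nth by simp
      qed
      have d2: "k \<notin> set (map (\<lambda>j. (F^^(Suc j)) t) [0..<Lt])"
        using FmS[OF tS] unfolding S_def by (auto simp del: funpow.simps)
      have lst: "last p0 = t"
      proof -
        have e: "Suc (Lt - 1) = Lt" using Lt0 by simp
        have "last p0 = (F^^(Suc (Lt - 1))) t" unfolding p0_def using Lt0 by (simp add: last_map del: funpow.simps)
        then show ?thesis unfolding e using Ltt by simp
      qed
      have ed: "(p0 ! i, p0 ! (i + 1)) \<in> Gedges n k" if "i + 1 < length p0" for i
      proof (cases i)
        case 0
        have "p0 ! 0 = k" "p0 ! 1 = F t" unfolding p0_def using Lt0 by auto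
        then show ?thesis using edge[OF tS] 0 unfolding t_def by simp
      next
        case (Suc j)
        have jl: "j + 1 < Lt" using that Suc unfolding p0_def by simp
        have "p0 ! i = (F^^(Suc j)) t" "p0 ! (i+1) = F ((F^^(Suc j)) t)"
          unfolding p0_def using Suc jl by auto
        moreover have "(F^^(Suc j)) t \<noteq> t" using Ltm[of "Suc j"] jl by simp
        ultimately show ?thesis using edge[OF FmS[OF tS, of "Suc j"]] unfolding t_def by simp
      qed
      show ?thesis unfolding is_tail_def using d1 d2 lst ed tt unfolding p0_def by simp
    qed
    have inp0i: "(F^^(Suc j)) t \<in> set p0" if "j < Lt" for j
    proof -
      have "j \<in> set [0..<Lt]" using that by simp
      then have "(\<lambda>j. (F^^(Suc j)) t) j \<in> set (map (\<lambda>j. (F^^(Suc j)) t) [0..<Lt])"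
        by (simp only: set_map) (rule imageI)
      then show ?thesis unfolding p0_def by simp
    qed
    have inp0: "(F^^m) t \<in> set p0" for m
    proof (cases "m mod Lt = 0")
      case True
      have e: "Suc (Lt - 1) = Lt" using Lt0 by simp
      have "(F^^m) t = (F^^(Suc (Lt - 1))) t" unfolding e using P.funpow_mod_per[OF tS, of m] Ltt True
        unfolding Lt_def by simp
      then show ?thesis using inp0i[of "Lt - 1"] Lt0 by simp
    next
      case False
      then have "(F^^m) t = (F^^(Suc (m mod Lt - 1))) t" using P.funpow_mod_per[OF tS, of m]
        unfolding Lt_def by simp
      moreover have "m mod Lt - 1 < Lt" using Lt0 by (simp add: less_imp_diff_less)
      ultimately show ?thesis using inp0i[of "m mod Lt - 1"] by simp
    qed
    have H: "(F^^m) t \<noteq> 0" "(F^^m) t \<noteq> k - 1" for m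
      using assms(2) p0tail inp0[of m] by auto
    have s2: "2 \<le> s"
    proof (rule ccontr)
      assume "\<not> 2 \<le> s" then have "t = 0" using s1 unfolding t_def by simp
      then show False using H(1)[of 0] by simp
    qed
    have s3: "s \<le> k - 1"
    proof (rule ccontr)
      assume "\<not> s \<le> k - 1" then have "t = k - 1" using s0 unfolding t_def by simp
      then show False using H(2)[of 0] by simp
    qed
    have avoid: "(F^^m) x \<noteq> s - 1" if "x \<in> {0, k-1}" for x m
    proof
      assume "(F^^m) x = s - 1"
      moreover have "x \<in> S" using that km1 by auto
      ultimately obtain m' where "(F^^m') t = x" using P.orbit_back[of x m t] unfolding t_def by auto
      then show False using H that by auto
    qed
    have Ft: "F t = a mod k" unfolding F_def FF_def t_def by simp
    have Fk: "F (k-1) = (a - 1) mod k"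
    proof -
      have "F (k-1) = (k - 1 + a) mod k" unfolding F_def FF_def using s3 by simp
      also have "\<dots> = (a - 1 + 1*k) mod k" by (simp add: algebra_simps)
      also have "\<dots> = (a - 1) mod k" by (rule mod_mult_self1)
      finally show ?thesis .
    qed
    have F0: "F 0 = (a + 1) mod k" unfolding F_def FF_def using s2 by (simp add: algebra_simps)
    have n3: "(n-3) mod (k+1) = s - 2"
    proof -
      have e: "n - 3 = (s - 2) + q*(k+1)" using nq by (simp add: algebra_simps)
      show ?thesis unfolding e using s2 s0 by simp
    qed
    have n1: "(n-1) mod (k+1) = s" unfolding s_def ..
    have lenp0: "length p0 = Lt + 1" unfolding p0_def by simp
    have tails: "length p - 1 = Lt" if "is_tail n k p" for p
      using tail_len_unique[OF k that p0tail] lenp0 by simp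
    define y where "y i = (F^^i) (k-1)" for i
    have yS: "y i \<in> S" for i unfolding y_def using FmS km1 by simp
    have cl1: "(F^^i) t = (y i + 1) mod k"
      if "1 \<le> i" "\<forall>j. 1 \<le> j \<and> j < i \<longrightarrow> y j \<noteq> s-2 \<and> y j \<noteq> k-1" for i
      using that
    proof (induction i)
      case 0 then show ?case by simp
    next
      case (Suc i)
      show ?case
      proof (cases "i = 0")
        case True
        have "(F^^Suc i) t = a mod k" using True Ft by simp
        moreover have "y (Suc i) = (a-1) mod k" using True Fk unfolding y_def by simp
        ultimately show ?thesis by (simp add: mod_add_left_eq)
      next
        case False
        then have IH: "(F^^i) t = (y i + 1) mod k" using Suc by auto
        have yi: "y i \<noteq> s-2" "y i \<noteq> k-1" using Suc.prems(2) False by auto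
        have yi3: "y i \<noteq> s-1" using avoid[of "k-1" i] unfolding y_def by auto
        have r: "0 \<le> y i" "y i \<le> k-1" using yS[of i] unfolding S_def by auto
        have e: "(y i + 1) mod k = y i + 1" using r yi by simp
        have "(F^^Suc i) t = F (y i + 1)" using IH e by simp
        also have "\<dots> = (F (y i) + 1) mod k" unfolding F_def
          by (rule FF_shift) (use k s2 s3 r yi yi3 in auto)
        also have "F (y i) = y (Suc i)" unfolding y_def by simp
        finally show ?thesis .
      qed
    qed
    define L where "L = per F (k-1)"
    have L0: "0 < L" and yL: "y L = k - 1" using P.per_props[OF km1(1)] unfolding L_def y_def by auto
    define i0 where "i0 = (LEAST i. 1 \<le> i \<and> (y i = s-2 \<or> y i = k-1))"
    have Pi0: "1 \<le> i0 \<and> (y i0 = s-2 \<or> y i0 = k-1)" unfolding i0_def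
      by (rule LeastI[of _ L]) (use L0 yL in auto)
    have i0L: "i0 \<le> L" unfolding i0_def by (rule Least_le) (use L0 yL in auto)
    have before: "\<forall>j. 1 \<le> j \<and> j < i0 \<longrightarrow> y j \<noteq> s-2 \<and> y j \<noteq> k-1"
      unfolding i0_def using not_less_Least by blast
    have Fi0: "(F^^i0) t = (y i0 + 1) mod k" using cl1[OF _ before] Pi0 by simp
    have yi0: "y i0 = s - 2"
    proof (rule ccontr)
      assume "y i0 \<noteq> s - 2"
      then have "y i0 = k - 1" using Pi0 by simp
      then have "(F^^i0) t = 0" using Fi0 by simp
      then show False using H(1) by blast
    qed
    have "i0 \<noteq> L"
    proof
      assume "i0 = L" then have "s - 2 = k - 1" using yi0 yL by simp
      then show False using s3 by simp
    qed
    then have i0L': "i0 < L" using i0L by simp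
    have "(F^^i0) t = t" using Fi0 yi0 s2 s3 unfolding t_def by simp
    then have Lti0: "Lt \<le> i0" using Ltm[of i0] Pi0 by (cases "Lt \<le> i0") auto
    define C1 where "C1 = map (\<lambda>j. (F^^j) (k-1)) [0..<per F (k-1)]"
    have c1: "is_cycle n k C1" unfolding C1_def
      by (rule cyc[OF km1(1)]) (use avoid in auto)
    have m1: "k - 1 \<in> set C1" unfolding C1_def using L0 unfolding L_def by force
    have m1': "s - 2 \<in> set C1" unfolding C1_def using i0L' yi0 unfolding L_def y_def by force
    have lC1: "length C1 = L" unfolding C1_def L_def by simp
    define w where "w i = (F^^i) 0" for i
    have wS: "w i \<in> S" for i unfolding w_def using FmS km1 by simp
    have cl2: "(F^^i) t = (w i - 1) mod k"
      if "1 \<le> i" "\<forall>j. 1 \<le> j \<and> j < i \<longrightarrow> w j \<noteq> s \<and> w j \<noteq> 0" for i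
      using that
    proof (induction i)
      case 0 then show ?case by simp
    next
      case (Suc i)
      show ?case
      proof (cases "i = 0")
        case True
        have "(F^^Suc i) t = a mod k" using True Ft by simp
        moreover have "w (Suc i) = (a+1) mod k" using True F0 unfolding w_def by simp
        ultimately show ?thesis by (simp add: mod_diff_left_eq)
      next
        case False
        then have IH: "(F^^i) t = (w i - 1) mod k" using Suc by auto
        have wi: "w i \<noteq> s" "w i \<noteq> 0" using Suc.prems(2) False by auto
        have wi3: "w i \<noteq> s-1" using avoid[of 0 i] unfolding w_def by auto
        have r: "0 \<le> w i" "w i \<le> k-1" using wS[of i] unfolding S_def by auto
        have e: "(w i - 1) mod k = w i - 1" using r wi by simp
        have sh: "F (w i - 1 + 1) = (F (w i - 1) + 1) mod k" unfolding F_def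
          by (rule FF_shift) (use k s2 s3 r wi wi3 in auto)
        have rr: "0 \<le> F (w i - 1)" "F (w i - 1) \<le> k - 1" using FS[of "w i - 1"] unfolding S_def by auto
        have "(F^^Suc i) t = F (w i - 1)" using IH e by simp
        also have "\<dots> = ((F (w i - 1) + 1) mod k - 1) mod k"
          using rr by (simp add: mod_diff_left_eq)
        also have "\<dots> = (w (Suc i) - 1) mod k" using sh unfolding w_def by simp
        finally show ?thesis .
      qed
    qed
    define L2 where "L2 = per F 0"
    have L20: "0 < L2" and wL: "w L2 = 0" using P.per_props[OF km1(2)] unfolding L2_def w_def by auto
    define i1 where "i1 = (LEAST i. 1 \<le> i \<and> (w i = s \<or> w i = 0))"
    have Pi1: "1 \<le> i1 \<and> (w i1 = s \<or> w i1 = 0)" unfolding i1_def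
      by (rule LeastI[of _ L2]) (use L20 wL in auto)
    have i1L: "i1 \<le> L2" unfolding i1_def by (rule Least_le) (use L20 wL in auto)
    have before2: "\<forall>j. 1 \<le> j \<and> j < i1 \<longrightarrow> w j \<noteq> s \<and> w j \<noteq> 0"
      unfolding i1_def using not_less_Least by blast
    have Fi1: "(F^^i1) t = (w i1 - 1) mod k" using cl2[OF _ before2] Pi1 by simp
    have wi1: "w i1 = s"
    proof (rule ccontr)
      assume "w i1 \<noteq> s"
      then have "w i1 = 0" using Pi1 by simp
      then have "(F^^i1) t = k - 1" using Fi1 k by (simp add: zmod_minus1)
      then show False using H(2) by blast
    qed
    have "i1 \<noteq> L2"
    proof
      assume "i1 = L2" then have "s = 0" using wi1 wL by simp
      then show False using s2 by simp
    qed
    then have i1L': "i1 < L2" using i1L by simp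
    define C2 where "C2 = map (\<lambda>j. (F^^j) 0) [0..<per F 0]"
    have c2: "is_cycle n k C2" unfolding C2_def
      by (rule cyc[OF km1(2)]) (use avoid in auto)
    have m2: "0 \<in> set C2" unfolding C2_def using L20 unfolding L2_def by force
    have m2': "s \<in> set C2" unfolding C2_def using i1L' wi1 unfolding L2_def w_def by force
    have "\<forall>p. is_tail n k p \<longrightarrow> length C1 > length p - 1"
      using tails lC1 Lti0 i0L' by auto
    then show ?thesis using c1 m1 m1' c2 m2 m2' n3 n1 by metis
  qed
qed


end
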